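(* Let $G$ be a graph, $B\subseteq V(G)$ and $\ell\ge 1$. Then $B$ is a specified $\ell$-leaky forcing set of $G$ if and only if $B$ is an $(\ell-1)$-leaky forcing set of $G$ such that for every set $L\subseteq V(G)$ of $\ell-1$ vertex leaks and every $v\in V(G)\setminus B$ there exist forces $x\to v$ and $y\to v$ in $\mathcal{F}_L(B)$ with $x\neq y$.
   Context: All graphs are finite, simple and undirected. Zero forcing: a blue vertex $u$ with exactly one white neighbor $w$ may force $w$ (color it blue), written $u\to w$. From an initial blue set $B$, a forcing sequence is a chronologically ordered list of forces each valid when performed. A vertex leak is a vertex not allowed to perform any force; $B$ is an $\ell$-leaky forcing set if for every set of at most $\ell$ vertex leaks, exhaustively applying the forcing rule from $B$ (leaks never forcing) colors all of $V(G)$ blue. For $L\subseteq V(G)$, $\mathcal{F}_L(B)$ is the set of all forces $x\to v$ occurring in some forcing sequence from $B$ in which no vertex of $L$ performs a force. A specified leak is an ordered pair $v\to u$ of vertices indicating that $v$ is prohibited from forcing $u$. $B$ is a specified $\ell$-leaky forcing set if for every set of at most $\ell$ specified leaks, exhaustively applying the forcing rule from $B$ while never performing a prohibited force colors all of $V(G)$ blue. *)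

theory Defs
  imports Main
begin

definition simple_graph :: "'a set \<Rightarrow> ('a \<Rightarrow> 'a \<Rightarrow> bool) \<Rightarrow> bool" where
  "simple_graph V E \<longleftrightarrow> finite V \<and>
     (\<forall>u v. E u v \<longrightarrow> u \<in> V \<and> v \<in> V \<and> u \<noteq> v) \<and>
     (\<forall>u v. E u v \<longrightarrow> E v u)"

definition can_force :: "('a \<Rightarrow> 'a \<Rightarrow> bool) \<Rightarrow> 'a set \<Rightarrow> 'a \<Rightarrow> 'a \<Rightarrow> bool" where
  "can_force E S u w \<longleftrightarrow> u \<in> S \<and> E u w \<and> w \<notin> S \<and> (\<forall>x. E u x \<and> x \<noteq> w \<longrightarrow> x \<in> S)"

fun forcing_seq :: "('a \<Rightarrow> 'a \<Rightarrow> bool) \<Rightarrow> ('a \<Rightarrow> 'a \<Rightarrow> bool) \<Rightarrow> 'a set \<Rightarrow> ('a \<times> 'a) list \<Rightarrow> bool" where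
  "forcing_seq E ok S [] = True"
| "forcing_seq E ok S ((u, w) # fs) =
     (ok u w \<and> can_force E S u w \<and> forcing_seq E ok (insert w S) fs)"

definition final_blue :: "'a set \<Rightarrow> ('a \<times> 'a) list \<Rightarrow> 'a set" where
  "final_blue S fs = S \<union> snd ` set fs"

definition colors_all :: "'a set \<Rightarrow> ('a \<Rightarrow> 'a \<Rightarrow> bool) \<Rightarrow> ('a \<Rightarrow> 'a \<Rightarrow> bool) \<Rightarrow> 'a set \<Rightarrow> bool" where
  "colors_all V E ok B \<longleftrightarrow>
     (\<forall>fs. forcing_seq E ok B fs \<and> \<not> (\<exists>u w. ok u w \<and> can_force E (final_blue B fs) u w)
        \<longrightarrow> final_blue B fs = V)"

text \<open>l-leaky forcing set (vertex leaks: leaks never force).\<close>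
definition leaky_forcing_set :: "'a set \<Rightarrow> ('a \<Rightarrow> 'a \<Rightarrow> bool) \<Rightarrow> 'a set \<Rightarrow> nat \<Rightarrow> bool" where
  "leaky_forcing_set V E B l \<longleftrightarrow>
     (\<forall>L. L \<subseteq> V \<and> card L \<le> l \<longrightarrow> colors_all V E (\<lambda>u w. u \<notin> L) B)"

text \<open>specified l-leaky forcing set (specified leaks: prohibited ordered pairs v \<rightarrow> u).\<close>
definition specified_leaky_forcing_set :: "'a set \<Rightarrow> ('a \<Rightarrow> 'a \<Rightarrow> bool) \<Rightarrow> 'a set \<Rightarrow> nat \<Rightarrow> bool" where
  "specified_leaky_forcing_set V E B l \<longleftrightarrow>
     (\<forall>P. P \<subseteq> V \<times> V \<and> card P \<le> l \<longrightarrow> colors_all V E (\<lambda>u w. (u, w) \<notin> P) B)"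

definition forces_F :: "('a \<Rightarrow> 'a \<Rightarrow> bool) \<Rightarrow> 'a set \<Rightarrow> 'a set \<Rightarrow> ('a \<times> 'a) set" where
  "forces_F E L B = {f. \<exists>fs. forcing_seq E (\<lambda>u w. u \<notin> L) B fs \<and> f \<in> set fs}"

end

theory Submission
  imports Defs
begin

lemma final_blue_cons[simp]: "final_blue S ((u,w)#fs) = final_blue (insert w S) fs"
  by (auto simp: final_blue_def)

lemma final_blue_nil[simp]: "final_blue S [] = S"
  by (simp add: final_blue_def)

lemma fs_mono:
  assumes "forcing_seq E ok1 S fs" "\<And>u w. ok1 u w \<Longrightarrow> ok2 u w"
  shows "forcing_seq E ok2 S fs"
  using assms by (induction fs arbitrary: S) auto

lemma fs_mem:
  assumes "forcing_seq E ok S fs" "(u,w) \<in> set fs"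
  shows "ok u w \<and> E u w"
  using assms by (induction fs arbitrary: S) (auto simp: can_force_def)

lemma fs_notin:
  assumes "forcing_seq E ok S fs" "w \<in> S"
  shows "(z,w) \<notin> set fs"
  using assms by (induction fs arbitrary: S) (auto simp: can_force_def, blast)

lemma fs_sub:
  assumes "forcing_seq E ok S fs" "S \<subseteq> S'"
  shows "S \<subseteq> final_blue S fs"
  by (auto simp: final_blue_def)

lemma fs_V:
  assumes "forcing_seq E ok S fs" "S \<subseteq> V" "\<And>u w. E u w \<Longrightarrow> w \<in> V"
  shows "final_blue S fs \<subseteq> V"
  using assms by (induction fs arbitrary: S) (auto simp: can_force_def, blast)

lemma cf_unique:
  assumes "can_force E F x w1" "can_force E F x w2"
  shows "w1 = w2"
  using assms unfolding can_force_def by blast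

lemma dom:
  assumes "forcing_seq E ok S fs" "S \<subseteq> F" "\<And>u w. ok u w \<Longrightarrow> can_force E F u w \<Longrightarrow> False"
  shows "final_blue S fs \<subseteq> F"
  using assms
proof (induction fs arbitrary: S)
  case Nil
  then show ?case by simp
next
  case (Cons a fs)
  obtain u w where a: "a = (u,w)" by force
  have h: "ok u w" "can_force E S u w" "forcing_seq E ok (insert w S) fs"
    using Cons.prems a by auto
  have "w \<in> F"
  proof (rule ccontr)
    assume "w \<notin> F"
    hence "can_force E F u w" using h(2) Cons.prems(2) unfolding can_force_def by blast
    thus False using Cons.prems(3) h(1) by blast
  qed
  then show ?case using Cons.IH[OF h(3)] Cons.prems a by auto
qed

lemma only_one:
  assumes "forcing_seq E ok S gs" "S \<subseteq> F" "w0 \<notin> F"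
    "\<And>u w. ok u w \<Longrightarrow> can_force E F u w \<Longrightarrow> u = y0 \<and> w = w0"
    "(z,w0) \<in> set gs"
  shows "z = y0"
  using assms
proof (induction gs arbitrary: S)
  case Nil
  then show ?case by simp
next
  case (Cons a gs)
  obtain u w where a: "a = (u,w)" by force
  have h: "ok u w" "can_force E S u w" "forcing_seq E ok (insert w S) gs"
    using Cons.prems a by auto
  show ?case
  proof (cases "w \<in> F")
    case True
    then show ?thesis using Cons.IH[OF h(3)] Cons.prems a by auto
  next
    case False
    hence "can_force E F u w" using h(2) Cons.prems(2) unfolding can_force_def by blast
    hence uw: "u = y0" "w = w0" using Cons.prems(4) h(1) by auto
    show ?thesis
    proof (cases "(z,w0) = (u,w)")
      case True then show ?thesis using uw by simp
    next
      case False
      hence "(z,w0) \<in> set gs" using Cons.prems a by auto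
      moreover have "w0 \<in> insert w S" using uw by simp
      ultimately show ?thesis using fs_notin[OF h(3)] by blast
    qed
  qed
qed

lemma exists_max:
  assumes "finite V" "\<And>u w. E u w \<Longrightarrow> w \<in> V"
  shows "\<exists>fs. forcing_seq E ok S fs \<and> \<not>(\<exists>u w. ok u w \<and> can_force E (final_blue S fs) u w)"
  using assms
proof (induction "card (V - S)" arbitrary: S rule: less_induct)
  case less
  show ?case
  proof (cases "\<exists>u w. ok u w \<and> can_force E S u w")
    case False
    then show ?thesis by (intro exI[of _ "[]"]) simp
  next
    case True
    then obtain u w where uw: "ok u w" "can_force E S u w" by blast
    hence w: "w \<in> V" "w \<notin> S" using less.prems by (auto simp: can_force_def)
    have "V - insert w S = (V - S) - {w}" by auto
    hence "card (V - insert w S) < card (V - S)" using less.prems(1) w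
      by (metis DiffI card_Diff1_less finite_Diff)
    then obtain fs where "forcing_seq E ok (insert w S) fs"
       "\<not>(\<exists>u w'. ok u w' \<and> can_force E (final_blue (insert w S) fs) u w')"
      using less.hyps less.prems by blast
    then show ?thesis using uw by (intro exI[of _ "(u,w)#fs"]) simp
  qed
qed

lemma cardP:
  assumes "L \<subseteq> V" "finite V" "\<And>u w. E u w \<Longrightarrow> u \<in> V \<and> w \<in> V"
  shows "card {(x,w). x \<in> L \<and> can_force E F x w} \<le> card L \<and>
      {(x,w). x \<in> L \<and> can_force E F x w} \<subseteq> V \<times> V"
proof
  let ?P = "{(x,w). x \<in> L \<and> can_force E F x w}"
  have inj: "inj_on fst ?P"
  proof (rule inj_onI)
    fix a b assume a: "a \<in> ?P" and b: "b \<in> ?P" and e: "fst a = fst b"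
    obtain x1 w1 where 1: "a = (x1,w1)" "can_force E F x1 w1" using a by blast
    obtain x2 w2 where 2: "b = (x2,w2)" "can_force E F x2 w2" using b by blast
    have "x1 = x2" using e 1 2 by simp
    have "can_force E F x1 w2" using 2(2) \<open>x1 = x2\<close> by simp
    hence "w1 = w2" by (rule cf_unique[OF 1(2)])
    thus "a = b" using 1 2 \<open>x1 = x2\<close> by simp
  qed
  have finL: "finite L" using assms finite_subset by blast
  have "card ?P = card (fst ` ?P)" using card_image[OF inj] by simp
  also have "\<dots> \<le> card L" using finL by (intro card_mono) auto
  finally show "card ?P \<le> card L" .
  show "?P \<subseteq> V \<times> V" using assms(3) unfolding can_force_def by blast
qed

theorem theorem3p1:
  fixes V :: "'a set" and E :: "'a \<Rightarrow> 'a \<Rightarrow> bool" and B :: "'a set" and l :: nat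
  assumes "simple_graph V E" and "B \<subseteq> V" and "l \<ge> 1"
  shows "specified_leaky_forcing_set V E B l \<longleftrightarrow>
    (leaky_forcing_set V E B (l - 1) \<and>
     (\<forall>L. L \<subseteq> V \<and> card L = l - 1 \<longrightarrow>
        (\<forall>v \<in> V - B. \<exists>x y. (x, v) \<in> forces_F E L B \<and> (y, v) \<in> forces_F E L B \<and> x \<noteq> y)))"
proof -
  have finV: "finite V" using assms(1) by (simp add: simple_graph_def)
  have EV: "\<And>u w. E u w \<Longrightarrow> u \<in> V \<and> w \<in> V" using assms(1) by (simp add: simple_graph_def)
  have EV2: "\<And>u w. E u w \<Longrightarrow> w \<in> V" using EV by blast
  have cardP: "card {(x,w). x \<in> L \<and> can_force E F x w} \<le> card L \<and>
      {(x,w). x \<in> L \<and> can_force E F x w} \<subseteq> V \<times> V" if "L \<subseteq> V" for L F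
    by (rule cardP[OF that finV EV])
  show ?thesis
  proof
    assume S: "specified_leaky_forcing_set V E B l"
    have A: "leaky_forcing_set V E B (l - 1)"
      unfolding leaky_forcing_set_def colors_all_def
    proof (intro allI impI)
      fix L fs
      assume L: "L \<subseteq> V \<and> card L \<le> l - 1"
        and fs: "forcing_seq E (\<lambda>u w. u \<notin> L) B fs \<and>
            \<not> (\<exists>u w. u \<notin> L \<and> can_force E (final_blue B fs) u w)"
      define F where "F = final_blue B fs"
      define P where "P = {(x,w). x \<in> L \<and> can_force E F x w}"
      have P0: "card P \<le> card L" "P \<subseteq> V \<times> V" using cardP[of L F] L unfolding P_def by blast+
      have cP: "card P \<le> l" using P0(1) L by linarith
      note P = cP P0(2)
      have "forcing_seq E (\<lambda>u w. (u,w) \<notin> P) B fs"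
        by (rule fs_mono[OF conjunct1[OF fs]]) (auto simp: P_def)
      moreover have "\<not> (\<exists>u w. (u,w) \<notin> P \<and> can_force E F u w)"
        using fs by (auto simp: P_def F_def)
      moreover have "colors_all V E (\<lambda>u w. (u,w) \<notin> P) B"
        using S P unfolding specified_leaky_forcing_set_def by blast
      ultimately show "final_blue B fs = V"
        unfolding colors_all_def F_def by blast
    qed
    have Bc: "\<forall>v \<in> V - B. \<exists>x y. (x, v) \<in> forces_F E L B \<and> (y, v) \<in> forces_F E L B \<and> x \<noteq> y"
      if L: "L \<subseteq> V" "card L = l - 1" for L
    proof
      fix v assume v: "v \<in> V - B"
      show "\<exists>x y. (x, v) \<in> forces_F E L B \<and> (y, v) \<in> forces_F E L B \<and> x \<noteq> y"
      proof (rule ccontr)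
        assume nt: "\<not> ?thesis"
        obtain x0 where x0: "x0 \<in> V" "\<And>x. (x,v) \<in> forces_F E L B \<Longrightarrow> x = x0"
        proof (cases "\<exists>x. (x,v) \<in> forces_F E L B")
          case True
          then obtain x where x: "(x,v) \<in> forces_F E L B" by blast
          then obtain fs where "forcing_seq E (\<lambda>u w. u \<notin> L) B fs" "(x,v) \<in> set fs"
            unfolding forces_F_def by blast
          then have "E x v" using fs_mem by fast
          then have "x \<in> V" using EV by blast
          show ?thesis
          proof (rule that[OF \<open>x \<in> V\<close>])
            fix x' assume "(x',v) \<in> forces_F E L B"
            then show "x' = x" using x nt by blast
          qed
        next
          case False
          show ?thesis
          proof (rule that[of v])
            show "v \<in> V" using v by blast
            fix x' assume "(x',v) \<in> forces_F E L B"
            then show "x' = v" using False by blast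
          qed
        qed
        define ok where "ok = (\<lambda>u w. u \<notin> L \<and> (u,w) \<noteq> (x0,v))"
        have "\<exists>fs. forcing_seq E ok B fs \<and> \<not>(\<exists>u w. ok u w \<and> can_force E (final_blue B fs) u w)"
          by (rule exists_max[OF finV EV2])
        then obtain fs where fs: "forcing_seq E ok B fs"
          "\<not>(\<exists>u w. ok u w \<and> can_force E (final_blue B fs) u w)"
          by blast
        define F where "F = final_blue B fs"
        define P where "P = {(x,w). x \<in> L \<and> can_force E F x w} \<union> {(x0,v)}"
        define P1 where "P1 = {(x,w). x \<in> L \<and> can_force E F x w}"
        have P1: "card P1 \<le> card L" "P1 \<subseteq> V \<times> V" using cardP[of L F] L unfolding P1_def by blast+
        have "card P \<le> card P1 + card {(x0,v)}"
          unfolding P_def P1_def[symmetric] by (rule card_Un_le)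
        hence "card P \<le> card P1 + 1" by simp
        hence cP: "card P \<le> l" using P1 L assms(3) by linarith
        have "P \<subseteq> V \<times> V" using P1(2) x0(1) v unfolding P_def P1_def[symmetric] by blast
        note P = cP this
        have "forcing_seq E (\<lambda>u w. (u,w) \<notin> P) B fs"
          by (rule fs_mono[OF fs(1)]) (auto simp: P_def ok_def)
        moreover have "\<not> (\<exists>u w. (u,w) \<notin> P \<and> can_force E F u w)"
          using fs by (auto simp: P_def F_def ok_def)
        moreover have "colors_all V E (\<lambda>u w. (u,w) \<notin> P) B"
          using S P unfolding specified_leaky_forcing_set_def by blast
        ultimately have "F = V"
          unfolding colors_all_def F_def by blast
        hence "v \<in> snd ` set fs" using v by (auto simp: F_def final_blue_def)
        then obtain x where x: "(x,v) \<in> set fs" by force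
        have "forcing_seq E (\<lambda>u w. u \<notin> L) B fs"
          by (rule fs_mono[OF fs(1)]) (auto simp: ok_def)
        hence "(x,v) \<in> forces_F E L B" using x by (auto simp: forces_F_def)
        hence "x = x0" using x0 by blast
        moreover have "ok x v" using fs_mem[OF fs(1) x] by blast
        ultimately show False by (simp add: ok_def)
      qed
    qed
    show "leaky_forcing_set V E B (l - 1) \<and>
     (\<forall>L. L \<subseteq> V \<and> card L = l - 1 \<longrightarrow>
        (\<forall>v \<in> V - B. \<exists>x y. (x, v) \<in> forces_F E L B \<and> (y, v) \<in> forces_F E L B \<and> x \<noteq> y))"
      using A Bc by blast
  next
    assume R: "leaky_forcing_set V E B (l - 1) \<and>
     (\<forall>L. L \<subseteq> V \<and> card L = l - 1 \<longrightarrow>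
        (\<forall>v \<in> V - B. \<exists>x y. (x, v) \<in> forces_F E L B \<and> (y, v) \<in> forces_F E L B \<and> x \<noteq> y))"
    show "specified_leaky_forcing_set V E B l"
      unfolding specified_leaky_forcing_set_def colors_all_def
    proof (intro allI impI)
      fix P fs
      assume P: "P \<subseteq> V \<times> V \<and> card P \<le> l"
        and fs: "forcing_seq E (\<lambda>u w. (u,w) \<notin> P) B fs \<and>
            \<not> (\<exists>u w. (u,w) \<notin> P \<and> can_force E (final_blue B fs) u w)"
      define F where "F = final_blue B fs"
      have FV: "F \<subseteq> V" using fs_V[of E _ B fs V] fs assms(2) EV2 by (auto simp: F_def)
      have BF: "B \<subseteq> F" by (auto simp: F_def final_blue_def)
      show "final_blue B fs = V"
      proof (rule ccontr)
        assume "final_blue B fs \<noteq> V"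
        hence FnV: "\<not> V \<subseteq> F" using FV F_def by blast
        define Y where "Y = {y. \<exists>w. can_force E F y w}"
        have YP: "Y \<subseteq> fst ` P" using fs by (force simp: Y_def F_def)
        have finP: "finite P" using P finV by (meson finite_SigmaI rev_finite_subset)
        have finY: "finite Y" using YP finP finite_subset by blast
        have "card Y \<le> card (fst ` P)" using YP finP by (intro card_mono) auto
        also have "\<dots> \<le> card P" using finP card_image_le by blast
        finally have cY: "card Y \<le> l" using P by linarith
        have YV: "Y \<subseteq> V" using EV by (auto simp: Y_def can_force_def)
        show False
        proof (cases "card Y \<le> l - 1")
          case True
          have ca: "colors_all V E (\<lambda>u w. u \<notin> Y) B"
            using R YV True unfolding leaky_forcing_set_def by blast
          have "\<exists>gs. forcing_seq E (\<lambda>u w. u \<notin> Y) B gs \<and> \<not>(\<exists>u w. u \<notin> Y \<and> can_force E (final_blue B gs) u w)"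
            by (rule exists_max[OF finV EV2])
          then obtain gs where gs: "forcing_seq E (\<lambda>u w. u \<notin> Y) B gs"
            "\<not>(\<exists>u w. u \<notin> Y \<and> can_force E (final_blue B gs) u w)"
            by blast
          have "final_blue B gs = V" using ca gs unfolding colors_all_def by blast
          moreover have "final_blue B gs \<subseteq> F"
            by (rule dom[OF gs(1) BF]) (auto simp: Y_def)
          ultimately show False using FnV by blast
        next
          case False
          hence "card Y = l" using cY by linarith
          hence "Y \<noteq> {}" using assms(3) by auto
          then obtain y0 where y0: "y0 \<in> Y" by blast
          then obtain w0 where w0: "can_force E F y0 w0" by (auto simp: Y_def)
          define L where "L = Y - {y0}"
          have L: "L \<subseteq> V" "card L = l - 1" using YV y0 finY \<open>card Y = l\<close>
            by (auto simp: L_def)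
          have w0V: "w0 \<in> V - B" "w0 \<notin> F" using w0 EV BF by (auto simp: can_force_def)
          obtain x y where xy: "(x, w0) \<in> forces_F E L B" "(y, w0) \<in> forces_F E L B" "x \<noteq> y"
            using R L w0V by blast
          obtain z where z: "(z, w0) \<in> forces_F E L B" "z \<noteq> y0"
            using xy by (cases "x = y0") auto
          then obtain gs where gs: "forcing_seq E (\<lambda>u w. u \<notin> L) B gs" "(z,w0) \<in> set gs"
            by (auto simp: forces_F_def)
          have "z = y0"
          proof (rule only_one[OF gs(1) BF w0V(2) _ gs(2)])
            fix u w assume "u \<notin> L" "can_force E F u w"
            then have "u \<in> Y" by (auto simp: Y_def)
            then have "u = y0" using \<open>u \<notin> L\<close> by (auto simp: L_def)
            then have "w = w0" using cf_unique[OF w0] \<open>can_force E F u w\<close> by blast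
            then show "u = y0 \<and> w = w0" using \<open>u = y0\<close> by blast
          qed
          then show False using z by blast
        qed
      qed
    qed
  qed
qed

end
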